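(* Let $n\ge2$, $\mathbf{q}\in\mathbb{R}^n$ and $1/n<t<1$. For $z\in\mathbb{R}$ let $\mathbf{v}(z)\in\mathbb{R}^n$ have entries $\mathbf{v}_i(z)=\max(0,\mathbf{q}_i-z)$ and let $$h(z)=\begin{cases}\sqrt t\,\|\mathbf{v}(z)\|_2+z & \text{if } z<\max_i\mathbf{q}_i,\\ z & \text{otherwise.}\end{cases}$$ Then $h$ is convex, attains its minimum on $\mathbb{R}$, and $$\max_{\mathbf{p}\in P(t)}\mathbf{p}\cdot\mathbf{q}=\min_{z\in\mathbb{R}}h(z).$$ Moreover, if $z^*$ is a minimizer of $h$ with $z^*<\max_i\mathbf{q}_i$, then $\mathbf{p}^*=\sqrt t\,\mathbf{v}(z^* )/\|\mathbf{v}(z^* )\|_2$ is a maximizer of $\mathbf{p}\cdot\mathbf{q}$ over $P(t)$; if $z^*=\max_i\mathbf{q}_i$ is a minimizer, then the vector $\mathbf{p}^*$ with $\mathbf{p}^*_i=1/|S|$ for $i\in S=\{i:\mathbf{q}_i=\max_j\mathbf{q}_j\}$ and $\mathbf{p}^*_i=0$ otherwise is a maximizer.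
   Context: $P(t)=\{\mathbf{p}\in\mathbb{R}^n:\mathbf{p}\ge0,\ \sum_i\mathbf{p}_i=1,\ \mathbf{p}\cdot\mathbf{p}\le t\}$. *)

theory Defs
  imports "HOL-Analysis.Analysis"
begin

definition Pset :: "real \<Rightarrow> (real ^ 'n) set" where
  "Pset t = {p. (\<forall>i. p $ i \<ge> 0) \<and> (\<Sum>i\<in>UNIV. p $ i) = 1 \<and> p \<bullet> p \<le> t}"

definition qmax :: "real ^ 'n \<Rightarrow> real" where
  "qmax q = Max (range (\<lambda>i. q $ i))"

definition vvec :: "real ^ 'n \<Rightarrow> real \<Rightarrow> real ^ 'n" where
  "vvec q z = (\<chi> i. max 0 (q $ i - z))"

definition hfun :: "real \<Rightarrow> real ^ 'n \<Rightarrow> real \<Rightarrow> real" where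
  "hfun t q z = (if z < qmax q then sqrt t * norm (vvec q z) + z else z)"

definition is_maximizer :: "real \<Rightarrow> real ^ 'n \<Rightarrow> real ^ 'n \<Rightarrow> bool" where
  "is_maximizer t q p \<longleftrightarrow> p \<in> Pset t \<and> (\<forall>p'\<in>Pset t. p' \<bullet> q \<le> p \<bullet> q)"

end

theory Submission
  imports Defs
begin

lemma qmax_ge: "q $ i \<le> qmax q"
  unfolding qmax_def by (rule Max_ge) auto

lemma qmax_ex: "\<exists>i. q $ i = qmax q"
proof -
  have "qmax q \<in> range (\<lambda>i. q $ i)" unfolding qmax_def by (rule Max_in) auto
  thus ?thesis by auto
qed

lemma vvec_zero: "z \<ge> qmax q \<Longrightarrow> vvec q z = 0"
proof -
  assume z: "z \<ge> qmax q"
  have "\<And>i. q $ i - z \<le> 0" using qmax_ge[of q] z by (meson diff_le_0_iff_le order_trans)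
  thus ?thesis unfolding vvec_def by (simp add: vec_eq_iff)
qed

lemma hfun_eq: "hfun t q z = sqrt t * norm (vvec q z) + z"
  unfolding hfun_def using vvec_zero[of q z] by auto

lemma norm_vvec: "norm (vvec q z) = sqrt (\<Sum>i\<in>UNIV. (max 0 (q $ i - z))\<^sup>2)"
  unfolding norm_vec_def L2_set_def vvec_def by simp

lemma sum_le_norm: fixes x :: "real ^ 'n" shows "(\<Sum>i\<in>UNIV. x $ i) \<le> sqrt (real CARD('n)) * norm x"
proof -
  have "((\<chi> i. (1::real)) :: real ^ 'n) \<bullet> x = (\<Sum>i\<in>UNIV. x $ i)" by (simp add: inner_vec_def)
  moreover have "norm ((\<chi> i. (1::real)) :: real ^ 'n) = sqrt (real CARD('n))"
    unfolding norm_vec_def L2_set_def by simp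
  ultimately show ?thesis using norm_cauchy_schwarz[of "(\<chi> i. (1::real)) :: real ^ 'n" x] by simp
qed

lemma weak_dual:
  assumes "p \<in> Pset t" "t \<ge> 0"
  shows "p \<bullet> q \<le> hfun t q z"
proof -
  have p0: "\<And>i. p $ i \<ge> 0" and s1: "(\<Sum>i\<in>UNIV. p $ i) = 1" and pp: "p \<bullet> p \<le> t"
    using assms unfolding Pset_def by auto
  have "p \<bullet> q = (\<Sum>i\<in>UNIV. p $ i * (q $ i - z)) + z"
    using s1 by (simp add: inner_vec_def algebra_simps sum.distrib sum_subtractf flip: sum_distrib_left)
  also have "(\<Sum>i\<in>UNIV. p $ i * (q $ i - z)) \<le> p \<bullet> vvec q z"
    unfolding inner_vec_def vvec_def using p0
    by (auto intro!: sum_mono mult_left_mono)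
  also have "p \<bullet> vvec q z \<le> norm p * norm (vvec q z)" by (rule norm_cauchy_schwarz)
  also have "norm p \<le> sqrt t" using pp by (simp add: norm_eq_sqrt_inner)
  hence "norm p * norm (vvec q z) \<le> sqrt t * norm (vvec q z)" by (simp add: mult_right_mono)
  finally show ?thesis by (simp add: hfun_eq)
qed

lemma convex_h: "t \<ge> 0 \<Longrightarrow> convex_on UNIV (hfun t q)"
proof -
  assume t: "t \<ge> 0"
  have cv: "convex_on UNIV (\<lambda>z. norm (vvec q z))"
    unfolding convex_on_def
  proof (intro conjI ballI allI impI)
    fix x y u v :: real assume uv: "0 \<le> u" "0 \<le> v" "u + v = 1"
    have "norm (vvec q (u *\<^sub>R x + v *\<^sub>R y)) \<le> norm (u *\<^sub>R vvec q x + v *\<^sub>R vvec q y)"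
    proof (rule norm_le_componentwise_cart)
      fix i
      have e: "q $ i - (u * x + v * y) = u * (q $ i - x) + v * (q $ i - y)"
        using uv(3) by (simp add: algebra_simps flip: distrib_right)
      have a: "u * (q $ i - x) \<le> u * max 0 (q $ i - x)" using uv by (simp add: mult_left_mono)
      have b: "v * (q $ i - y) \<le> v * max 0 (q $ i - y)" using uv by (simp add: mult_left_mono)
      show "norm (vvec q (u *\<^sub>R x + v *\<^sub>R y) $ i) \<le> norm ((u *\<^sub>R vvec q x + v *\<^sub>R vvec q y) $ i)"
        unfolding vvec_def using uv a b e by simp
    qed
    also have "\<dots> \<le> u * norm (vvec q x) + v * norm (vvec q y)"
      using uv by (metis abs_of_nonneg norm_scaleR norm_triangle_ineq)
    finally show "norm (vvec q (u *\<^sub>R x + v *\<^sub>R y)) \<le> u * norm (vvec q x) + v * norm (vvec q y)" .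
  qed simp
  have "convex_on UNIV (\<lambda>z. sqrt t * norm (vvec q z) + z)"
    by (intro convex_on_add convex_on_cmul cv) (auto simp: t convex_on_def)
  thus ?thesis by (simp add: hfun_eq[abs_def])
qed


lemma deriv_maxsq0: "((\<lambda>x::real. (max 0 x)\<^sup>2) has_field_derivative 2 * max 0 x) (at x)"
proof (cases "x = 0")
  case True
  have "((\<lambda>h::real. max 0 h) \<longlongrightarrow> max 0 0) (at 0)"
    by (intro tendsto_intros)
  hence l: "((\<lambda>h::real. max 0 h) \<longlongrightarrow> 0) (at 0)" by simp
  have ev: "\<forall>\<^sub>F h in at (0::real). max 0 h = ((max 0 (0 + h))\<^sup>2 - (max 0 0)\<^sup>2) / h"
    unfolding eventually_at_filter by (auto simp: max_def power2_eq_square)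
  have "((\<lambda>h::real. ((max 0 (0 + h))\<^sup>2 - (max 0 0)\<^sup>2) / h) \<longlongrightarrow> 0) (at 0)"
    using tendsto_cong[OF ev] l by simp
  thus ?thesis using True by (simp add: DERIV_def)
next
  case False
  show ?thesis
  proof (cases "x > 0")
    case True
    have d: "((\<lambda>x::real. x\<^sup>2) has_field_derivative 2 * x) (at x)"
      by (auto intro!: derivative_eq_intros)
    show ?thesis
      by (rule has_field_derivative_transform_within_open[OF _ _ _, of _ _ _ "{0<..}"])
         (use d True in auto)
  next
    case F2: False
    hence "x < 0" using False by simp
    have d: "((\<lambda>x::real. 0) has_field_derivative 0) (at x)"
      by (auto intro!: derivative_eq_intros)
    show ?thesis
      by (rule has_field_derivative_transform_within_open[OF _ _ _, of _ _ _ "{..<0}"])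
         (use d \<open>x < 0\<close> in auto)
  qed
qed

lemma deriv_maxsq: "((\<lambda>z::real. (max 0 (c - z))\<^sup>2) has_field_derivative - (2 * max 0 (c - z))) (at z)"
proof -
  have "((\<lambda>z::real. c - z) has_field_derivative -1) (at z)"
    by (auto intro!: derivative_eq_intros)
  from DERIV_chain2[OF deriv_maxsq0 this] show ?thesis by simp
qed


lemma part5:
  assumes t: "t > 0" and mn: "\<forall>y. hfun t q zs \<le> hfun t q y" and zl: "zs < qmax q"
  defines "p \<equiv> scaleR (sqrt t / norm (vvec q zs)) (vvec q zs)"
  shows "is_maximizer t q p \<and> p \<bullet> q = hfun t q zs"
proof -
  define m where "m = (\<lambda>i. max 0 (q $ i - zs))"
  define N where "N = (\<lambda>z. \<Sum>i\<in>UNIV. (max 0 (q $ i - z))\<^sup>2)"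
  define S where "S = (\<Sum>i\<in>UNIV. m i)"
  have hN: "\<And>y. hfun t q y = sqrt t * sqrt (N y) + y" unfolding N_def by (simp add: hfun_eq norm_vvec)
  obtain i0 where i0: "q $ i0 = qmax q" using qmax_ex by blast
  have Npos: "N zs > 0" unfolding N_def
  proof (rule sum_pos2[of UNIV i0])
    show "0 < (max 0 (q $ i0 - zs))\<^sup>2" using i0 zl by simp
  qed auto
  have dN: "(N has_field_derivative (\<Sum>i\<in>UNIV. - (2 * max 0 (q $ i - zs)))) (at zs)"
    unfolding N_def by (intro DERIV_sum deriv_maxsq)
  have dsum: "(\<Sum>i\<in>UNIV. - (2 * max 0 (q $ i - zs))) = - 2 * S"
    unfolding S_def m_def by (simp add: sum_negf sum_distrib_left)
  have dsq: "((\<lambda>y. sqrt (N y)) has_field_derivative inverse (sqrt (N zs)) / 2 * (- 2 * S)) (at zs)"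
    using DERIV_chain2[OF DERIV_real_sqrt[OF Npos] dN] unfolding dsum .
  have dh: "((\<lambda>y. sqrt t * sqrt (N y) + y) has_field_derivative
      sqrt t * (inverse (sqrt (N zs)) / 2 * (- 2 * S)) + 1) (at zs)"
    by (rule DERIV_add[OF DERIV_cmult[OF dsq] DERIV_ident])
  have "sqrt t * (inverse (sqrt (N zs)) / 2 * (- 2 * S)) + 1 = 0"
    by (rule DERIV_local_min[OF dh, of 1]) (use mn hN in auto)
  define nv where "nv = sqrt (N zs)"
  have nvpos: "nv > 0" unfolding nv_def using Npos by simp
  have nvn: "norm (vvec q zs) = nv" unfolding nv_def N_def by (simp add: norm_vvec)
  have key: "sqrt t * S = nv"
    using \<open>sqrt t * (inverse (sqrt (N zs)) / 2 * (- 2 * S)) + 1 = 0\<close> nvpos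
    unfolding nv_def[symmetric] by (simp add: field_simps)
  define c where "c = sqrt t / nv"
  have cpos: "c > 0" unfolding c_def using t nvpos by simp
  have pc: "\<And>i. p $ i = c * m i" unfolding p_def c_def m_def nvn by (simp add: vvec_def)
  have m0: "\<And>i. m i \<ge> 0" unfolding m_def by simp
  have mq: "\<And>i. m i * q $ i = (m i)\<^sup>2 + zs * m i"
    unfolding m_def by (auto simp: max_def power2_eq_square algebra_simps)
  have Nm: "N zs = (\<Sum>i\<in>UNIV. (m i)\<^sup>2)" unfolding N_def m_def by simp
  have nv2: "nv\<^sup>2 = N zs" unfolding nv_def using Npos by simp
  have sum1: "(\<Sum>i\<in>UNIV. p $ i) = 1"
  proof -
    have "(\<Sum>i\<in>UNIV. p $ i) = c * S" unfolding pc S_def by (simp add: sum_distrib_left)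
    thus ?thesis using key nvpos unfolding c_def by (simp add: field_simps)
  qed
  have ppt: "p \<bullet> p = t"
  proof -
    have "p \<bullet> p = c\<^sup>2 * N zs" unfolding inner_vec_def pc Nm
      by (simp add: sum_distrib_left power2_eq_square algebra_simps)
    also have "\<dots> = t" unfolding c_def nv2[symmetric] using nvpos t by (simp add: power_divide)
    finally show ?thesis .
  qed
  have pq: "p \<bullet> q = hfun t q zs"
  proof -
    have "p \<bullet> q = c * (\<Sum>i\<in>UNIV. m i * q $ i)" unfolding inner_vec_def pc
      by (simp add: sum_distrib_left algebra_simps)
    also have "\<dots> = c * N zs + zs * (c * S)" unfolding mq Nm S_def
      by (simp add: sum.distrib sum_distrib_left algebra_simps)
    also have "c * S = 1" using key nvpos unfolding c_def by (simp add: field_simps)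
    also have "c * N zs = sqrt t * nv" unfolding c_def nv2[symmetric] using nvpos
      by (simp add: power2_eq_square)
    finally show ?thesis unfolding hN nv_def by simp
  qed
  have pP: "p \<in> Pset t" unfolding Pset_def using sum1 ppt pc cpos m0 by auto
  show ?thesis unfolding is_maximizer_def using pP pq weak_dual[of _ t q zs] t by auto
qed


lemma part6:
  assumes t: "t > 0" and mn: "\<forall>y. hfun t q (qmax q) \<le> hfun t q y"
  defines "u \<equiv> (\<chi> i. if q $ i = qmax q then 1 / real (card {j. q $ j = qmax q}) else 0)"
  shows "is_maximizer t q u \<and> u \<bullet> q = hfun t q (qmax q)"
proof -
  define Sset where "Sset = {j. q $ j = qmax q}"
  define k where "k = card Sset"
  obtain i0 where i0: "q $ i0 = qmax q" using qmax_ex by blast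
  have kpos: "k > 0" unfolding k_def Sset_def using i0 by (auto simp: card_gt_0_iff)
  define D where "D = (\<lambda>i. qmax q - q $ i) ` {i. q $ i < qmax q}"
  define \<delta> where "\<delta> = Min (insert 1 D)"
  have fD: "finite D" unfolding D_def by simp
  have dpos: "\<delta> > 0" unfolding \<delta>_def using fD by (auto simp: D_def)
  have dle: "\<And>i. q $ i < qmax q \<Longrightarrow> \<delta> \<le> qmax q - q $ i"
    unfolding \<delta>_def using fD by (intro Min_le) (auto simp: D_def)
  define z where "z = qmax q - \<delta>"
  have comp: "\<And>i. (max 0 (q $ i - z))\<^sup>2 = (if i \<in> Sset then \<delta>\<^sup>2 else 0)"
  proof -
    fix i
    show "(max 0 (q $ i - z))\<^sup>2 = (if i \<in> Sset then \<delta>\<^sup>2 else 0)"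
    proof (cases "q $ i = qmax q")
      case True thus ?thesis unfolding Sset_def z_def using dpos by simp
    next
      case False
      hence "q $ i < qmax q" using qmax_ge[of q i] by simp
      hence "q $ i - z \<le> 0" using dle unfolding z_def by force
      thus ?thesis unfolding Sset_def using False by simp
    qed
  qed
  have "(\<Sum>i\<in>UNIV. (max 0 (q $ i - z))\<^sup>2) = real k * \<delta>\<^sup>2"
    unfolding comp k_def by (simp add: sum.If_cases)
  hence nz: "norm (vvec q z) = sqrt (real k) * \<delta>" using dpos by (simp add: norm_vvec real_sqrt_mult)
  have hq: "hfun t q (qmax q) = qmax q" by (simp add: hfun_eq vvec_zero)
  have "qmax q \<le> sqrt t * (sqrt (real k) * \<delta>) + z" using mn[rule_format, of z] unfolding hq by (simp add: hfun_eq nz)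
  hence "\<delta> * 1 \<le> \<delta> * sqrt (t * real k)" unfolding z_def by (simp add: real_sqrt_mult algebra_simps)
  hence "1 \<le> sqrt (t * real k)" using dpos by simp
  hence tk: "1 \<le> t * real k" by (metis real_sqrt_le_1_iff real_sqrt_one not_le real_sqrt_less_iff)
  have uc: "\<And>i. u $ i = (if i \<in> Sset then 1 / real k else 0)" unfolding u_def Sset_def k_def by simp
  have s1: "(\<Sum>i\<in>UNIV. u $ i) = 1" unfolding uc using kpos by (simp add: sum.If_cases k_def, auto)
  have uu: "u \<bullet> u = 1 / real k"
  proof -
    have "u \<bullet> u = (\<Sum>i\<in>UNIV. (if i \<in> Sset then 1 / (real k)\<^sup>2 else 0))"
      unfolding inner_vec_def uc by (intro sum.cong) (auto simp: power2_eq_square)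
    also have "\<dots> = real k / (real k)\<^sup>2" by (simp add: sum.If_cases k_def)
    also have "\<dots> = 1 / real k" using kpos by (simp add: power2_eq_square)
    finally show ?thesis .
  qed
  have "u \<bullet> u \<le> t" unfolding uu using tk kpos by (simp add: field_simps)
  hence uP: "u \<in> Pset t" unfolding Pset_def using s1 by (auto simp: uc)
  have "u \<bullet> q = (\<Sum>i\<in>UNIV. if i \<in> Sset then qmax q / real k else 0)" unfolding inner_vec_def uc
    by (intro sum.cong) (auto simp: Sset_def)
  also have "\<dots> = (\<Sum>i\<in>Sset. qmax q / real k)" by (simp add: sum.If_cases)
  also have "\<dots> = qmax q" using kpos by (simp add: k_def, auto)
  finally have uq: "u \<bullet> q = hfun t q (qmax q)" using hq by simp
  show ?thesis unfolding is_maximizer_def using uP uq weak_dual[of _ t q "qmax q"] t by auto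
qed


lemma exists_min:
  fixes q :: "real ^ 'n"
  assumes tn: "1 / real CARD('n) < t" and t: "t > 0"
  shows "\<exists>z. \<forall>y. hfun t q z \<le> hfun t q y"
proof -
  define n where "n = real CARD('n)"
  have npos: "n > 0" unfolding n_def by simp
  define A where "A = sqrt t * (\<Sum>i\<in>UNIV. q $ i) / sqrt n"
  define c where "c = sqrt t * sqrt n - 1"
  have "1 < t * n" using tn npos unfolding n_def by (simp add: field_simps)
  hence "1 < sqrt (t * n)" by simp
  hence cpos: "c > 0" unfolding c_def by (simp add: real_sqrt_mult)
  have lb: "A - c * y \<le> hfun t q y" for y
  proof -
    have "(\<Sum>i\<in>UNIV. q $ i) - n * y = (\<Sum>i\<in>UNIV. q $ i - y)" unfolding n_def
      by (simp add: sum_subtractf)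
    also have "\<dots> \<le> (\<Sum>i\<in>UNIV. vvec q y $ i)" unfolding vvec_def by (intro sum_mono) simp
    also have "\<dots> \<le> sqrt n * norm (vvec q y)" unfolding n_def by (rule sum_le_norm)
    finally have "((\<Sum>i\<in>UNIV. q $ i) - n * y) / sqrt n \<le> norm (vvec q y)"
      using npos by (simp add: field_simps)
    hence "sqrt t * (((\<Sum>i\<in>UNIV. q $ i) - n * y) / sqrt n) \<le> sqrt t * norm (vvec q y)"
      using t by (intro mult_left_mono) auto
    moreover have "sqrt t * (((\<Sum>i\<in>UNIV. q $ i) - n * y) / sqrt n) = A - sqrt t * sqrt n * y"
      unfolding A_def using npos
      by (simp add: field_simps)
    ultimately show ?thesis unfolding c_def by (simp add: hfun_eq algebra_simps)
  qed
  define a where "a = min (qmax q) ((A - qmax q) / c)"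
  have cont: "continuous_on {a..qmax q} (hfun t q)"
    unfolding hfun_eq[abs_def] vvec_def by (intro continuous_intros)
  have "a \<le> qmax q" unfolding a_def by simp
  then obtain x where x: "x \<in> {a..qmax q}" and xm: "\<And>y. y \<in> {a..qmax q} \<Longrightarrow> hfun t q x \<le> hfun t q y"
    using continuous_attains_inf[OF compact_Icc _ cont] by fastforce
  have hq: "hfun t q (qmax q) = qmax q" by (simp add: hfun_eq vvec_zero)
  have xq: "hfun t q x \<le> qmax q" using xm[of "qmax q"] \<open>a \<le> qmax q\<close> hq by simp
  have "hfun t q x \<le> hfun t q y" for y
  proof (cases "y < a")
    case True
    hence "y < (A - qmax q) / c" unfolding a_def by simp
    hence "c * y < A - qmax q" using cpos by (simp add: field_simps)
    thus ?thesis using lb[of y] xq by simp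
  next
    case False
    show ?thesis
    proof (cases "y \<le> qmax q")
      case True thus ?thesis using False xm by simp
    next
      case F2: False
      thus ?thesis using xq by (simp add: hfun_eq vvec_zero)
    qed
  qed
  thus ?thesis by blast
qed

theorem mainTheorem11:
  fixes q :: "real ^ 'n" and t :: real
  assumes "CARD('n) \<ge> 2"
    and "1 / real CARD('n) < t" and "t < 1"
  shows "convex_on UNIV (hfun t q)
    \<and> (\<exists>z. \<forall>y. hfun t q z \<le> hfun t q y)
    \<and> (\<exists>p\<in>Pset t. \<forall>p'\<in>Pset t. p' \<bullet> q \<le> p \<bullet> q)
    \<and> (SUP p\<in>Pset t. p \<bullet> q) = (INF z. hfun t q z)
    \<and> (\<forall>zs. (\<forall>y. hfun t q zs \<le> hfun t q y) \<and> zs < qmax q \<longrightarrow>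
          is_maximizer t q (scaleR (sqrt t / norm (vvec q zs)) (vvec q zs)))
    \<and> ((\<forall>y. hfun t q (qmax q) \<le> hfun t q y) \<longrightarrow>
          is_maximizer t q (\<chi> i. if q $ i = qmax q
              then 1 / real (card {j. q $ j = qmax q}) else 0))"
proof -
  have t: "t > 0" using assms(2) by (smt (verit) of_nat_0_le_iff divide_nonneg_nonneg)
  obtain zm where zm: "\<forall>y. hfun t q zm \<le> hfun t q y" using exists_min[OF assms(2) t] by blast
  have "\<exists>p. is_maximizer t q p \<and> p \<bullet> q = hfun t q zm"
  proof (cases "zm < qmax q")
    case True thus ?thesis using part5[OF t zm True] by blast
  next
    case False
    have hq: "hfun t q (qmax q) = qmax q" by (simp add: hfun_eq vvec_zero)
    have hz: "hfun t q zm = zm" using False by (simp add: hfun_eq vvec_zero)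
    have m2: "\<forall>y. hfun t q (qmax q) \<le> hfun t q y" using zm hq hz False by (smt (verit))
    have "hfun t q zm = hfun t q (qmax q)" using zm m2 by (meson order_antisym)
    thus ?thesis using part6[OF t m2] by metis
  qed
  then obtain p where pm: "is_maximizer t q p" and pq: "p \<bullet> q = hfun t q zm" by blast
  have sup: "(SUP p\<in>Pset t. p \<bullet> q) = p \<bullet> q"
    using pm unfolding is_maximizer_def by (intro cSup_eq_maximum) auto
  have inf: "(INF z. hfun t q z) = hfun t q zm"
    using zm by (intro cInf_eq_minimum) auto
  have ex: "\<exists>p\<in>Pset t. \<forall>p'\<in>Pset t. p' \<bullet> q \<le> p \<bullet> q"
    using pm unfolding is_maximizer_def by blast
  have p5: "\<forall>zs. (\<forall>y. hfun t q zs \<le> hfun t q y) \<and> zs < qmax q \<longrightarrow>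
          is_maximizer t q (scaleR (sqrt t / norm (vvec q zs)) (vvec q zs))"
    using part5[OF t] by blast
  have p6: "(\<forall>y. hfun t q (qmax q) \<le> hfun t q y) \<longrightarrow>
          is_maximizer t q (\<chi> i. if q $ i = qmax q
              then 1 / real (card {j. q $ j = qmax q}) else 0)"
    using part6[OF t] by blast
  show ?thesis
    using convex_h[of t q] t zm ex sup inf pq p5 p6 by (intro conjI) auto
qed

end
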